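(* Let $A$, $B$, $C$ be commutative associative unital algebras over $\mathbb{C}$ or $\mathbb{R}$. If $\mathbf{g}\colon A\to B$ is an $m$-homomorphism and $\mathbf{f}\colon B\to C$ is an $n$-homomorphism, then $\mathbf{f}\circ\mathbf{g}\colon A\to C$ is an $nm$-homomorphism.
   Context: For a linear map $\mathbf{f}\colon A\to B$, its characteristic function is the formal power series $R(\mathbf{f},a,z)=\exp\bigl(\mathbf{f}(\ln(1+az))\bigr)\in B[[z]]$, where $\ln(1+az)=\sum_{k\ge1}(-1)^{k-1}a^kz^k/k$ and $\mathbf{f}$ is applied coefficientwise. For an integer $n\ge0$, a linear map $\mathbf{f}$ is an $n$-homomorphism if $\mathbf{f}(1)=n$ and $R(\mathbf{f},a,z)$ is a polynomial in $z$ of degree at most $n$ for every $a$ in its domain. *)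

theory Defs
  imports "HOL-Computational_Algebra.Formal_Power_Series"
begin

text \<open>A commutative associative unital algebra over a field 'k is modelled as a
commutative ring type 'a together with an explicit scalar multiplication
sc :: 'k => 'a => 'a satisfying the algebra axioms.\<close>

definition is_comm_alg :: "('k::field_char_0 \<Rightarrow> 'a::comm_ring_1 \<Rightarrow> 'a) \<Rightarrow> bool" where
  "is_comm_alg sc \<longleftrightarrow>
     (\<forall>c x y. sc c (x + y) = sc c x + sc c y) \<and>
     (\<forall>c d x. sc (c + d) x = sc c x + sc d x) \<and>
     (\<forall>c d x. sc c (sc d x) = sc (c * d) x) \<and>
     (\<forall>x. sc 1 x = x) \<and>
     (\<forall>c x y. sc c (x * y) = sc c x * y)"

definition is_lin_map ::
  "('k::field_char_0 \<Rightarrow> 'a::comm_ring_1 \<Rightarrow> 'a) \<Rightarrow> ('k \<Rightarrow> 'b::comm_ring_1 \<Rightarrow> 'b) \<Rightarrow> ('a \<Rightarrow> 'b) \<Rightarrow> bool" where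
  "is_lin_map scA scB f \<longleftrightarrow>
     (\<forall>x y. f (x + y) = f x + f y) \<and> (\<forall>c x. f (scA c x) = scB c (f x))"

definition fps_ln1p :: "('k::field_char_0 \<Rightarrow> 'a::comm_ring_1 \<Rightarrow> 'a) \<Rightarrow> 'a \<Rightarrow> 'a fps" where
  "fps_ln1p sc a = Abs_fps (\<lambda>k. if k = 0 then 0
       else sc ((- 1) ^ (k - 1) / of_nat k) (a ^ k))"

definition fps_map_coeff :: "('a \<Rightarrow> 'b) \<Rightarrow> 'a fps \<Rightarrow> 'b::zero fps" where
  "fps_map_coeff f g = Abs_fps (\<lambda>k. f (fps_nth g k))"

text \<open>exp(g) = sum_j g^j / j! for a power series g with zero constant term
  (the sum is finite in each coefficient).\<close>
definition fps_exp_alg :: "('k::field_char_0 \<Rightarrow> 'a::comm_ring_1 \<Rightarrow> 'a) \<Rightarrow> 'a fps \<Rightarrow> 'a fps" where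
  "fps_exp_alg sc g = Abs_fps (\<lambda>n. \<Sum>j\<le>n. sc (1 / fact j) (fps_nth (g ^ j) n))"

definition char_fun ::
  "('k::field_char_0 \<Rightarrow> 'a::comm_ring_1 \<Rightarrow> 'a) \<Rightarrow> ('k \<Rightarrow> 'b::comm_ring_1 \<Rightarrow> 'b) \<Rightarrow> ('a \<Rightarrow> 'b) \<Rightarrow> 'a \<Rightarrow> 'b fps" where
  "char_fun scA scB f a = fps_exp_alg scB (fps_map_coeff f (fps_ln1p scA a))"

definition is_n_hom ::
  "('k::field_char_0 \<Rightarrow> 'a::comm_ring_1 \<Rightarrow> 'a) \<Rightarrow> ('k \<Rightarrow> 'b::comm_ring_1 \<Rightarrow> 'b) \<Rightarrow> nat \<Rightarrow> ('a \<Rightarrow> 'b) \<Rightarrow> bool" where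
  "is_n_hom scA scB n f \<longleftrightarrow>
     is_lin_map scA scB f \<and> f 1 = of_nat n \<and>
     (\<forall>a. \<forall>k>n. fps_nth (char_fun scA scB f a) k = 0)"

end

theory Submission
  imports Defs "HOL-Computational_Algebra.Polynomial"
begin

unbundle fps_syntax


definition phi :: "('k::field_char_0 \<Rightarrow> 'a::comm_ring_1 \<Rightarrow> 'a) \<Rightarrow> 'k \<Rightarrow> 'a" where
  "phi sc c = sc c 1"

lemma sc_phi: "is_comm_alg sc \<Longrightarrow> sc c x = phi sc c * x"
  unfolding is_comm_alg_def phi_def by (metis mult_1)

lemma phi_add: "is_comm_alg sc \<Longrightarrow> phi sc (c + d) = phi sc c + phi sc d"
  unfolding is_comm_alg_def phi_def by metis

lemma phi_mult: "is_comm_alg sc \<Longrightarrow> phi sc (c * d) = phi sc c * phi sc d"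
  by (metis is_comm_alg_def phi_def sc_phi)

lemma phi_one: "is_comm_alg sc \<Longrightarrow> phi sc 1 = 1"
  unfolding is_comm_alg_def phi_def by metis

lemma phi_zero: "is_comm_alg sc \<Longrightarrow> phi sc 0 = 0"
  using phi_add[of sc 0 0] by simp

lemma phi_of_nat: "is_comm_alg sc \<Longrightarrow> phi sc (of_nat n) = of_nat n"
  by (induction n) (simp_all add: phi_zero phi_add phi_one)

lemma phi_power: "is_comm_alg sc \<Longrightarrow> phi sc (c ^ n) = phi sc c ^ n"
  by (induction n) (simp_all add: phi_one phi_mult)

lemma phi_minus: "is_comm_alg sc \<Longrightarrow> phi sc (- c) = - phi sc c"
  using phi_add[of sc c "-c"] phi_zero[of sc] by (simp add: minus_unique)

lemma phi_diff: "is_comm_alg sc \<Longrightarrow> phi sc (c - d) = phi sc c - phi sc d"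
  using phi_add[of sc c "-d"] phi_minus[of sc d] by simp

lemma phi_inv:
  assumes a: "is_comm_alg sc" and c: "c \<noteq> 0"
  shows "phi sc (1 / c) * phi sc c = 1"
proof -
  have "phi sc (1 / c) * phi sc c = phi sc (1 / c * c)" by (simp only: phi_mult[OF a])
  also have "1 / c * c = 1" using c by simp
  finally show ?thesis by (simp add: phi_one[OF a])
qed

lemma cancel_nat:
  fixes sc :: "'k::field_char_0 \<Rightarrow> 'a::comm_ring_1 \<Rightarrow> 'a"
  assumes "is_comm_alg sc" and "of_nat (Suc k) * (x::'a::comm_ring_1) = of_nat (Suc k) * y"
  shows "x = y"
proof -
  have "phi sc (1 / of_nat (Suc k)) * phi sc (of_nat (Suc k)) = (1::'a)"
    by (rule phi_inv[OF assms(1)], rule of_nat_neq_0)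
  then have "phi sc (1 / of_nat (Suc k)) * of_nat (Suc k) = (1::'a)"
    by (simp only: phi_of_nat[OF assms(1)])
  then show ?thesis using assms(2) by (metis mult.assoc mult_1)
qed

lemma E_nth: "is_comm_alg sc \<Longrightarrow>
  fps_exp_alg sc M $ k = (\<Sum>j\<le>k. phi sc (1 / fact j) * (M ^ j $ k))"
  unfolding fps_exp_alg_def by (simp add: sc_phi)

lemma pow_zero: "(M::'a::comm_ring_1 fps) $ 0 = 0 \<Longrightarrow> k < j \<Longrightarrow> (M ^ j) $ k = 0"
proof (induction j arbitrary: k)
  case 0 then show ?case by simp
next
  case (Suc j)
  have "(M ^ Suc j) $ k = (\<Sum>i=0..k. M $ i * (M ^ j) $ (k - i))"
    by (simp add: fps_mult_nth)
  also have "\<dots> = 0"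
  proof (rule sum.neutral, intro ballI)
    fix i assume "i \<in> {0..k}"
    show "M $ i * (M ^ j) $ (k - i) = 0"
    proof (cases "i = 0")
      case True then show ?thesis using Suc.prems by simp
    next
      case False then have "k - i < j" using Suc.prems \<open>i \<in> {0..k}\<close> by auto
      then show ?thesis using Suc.IH[of "k - i"] Suc.prems by simp
    qed
  qed
  finally show ?case .
qed

definition Ssum :: "('k::field_char_0 \<Rightarrow> 'a::comm_ring_1 \<Rightarrow> 'a) \<Rightarrow> 'a fps \<Rightarrow> nat \<Rightarrow> 'a fps" where
  "Ssum sc M N = (\<Sum>j\<le>N. fps_const (phi sc (1 / fact j)) * M ^ j)"

lemma trunc:
  assumes "is_comm_alg sc" "M $ 0 = 0" "k \<le> N"
  shows "fps_exp_alg sc M $ k = Ssum sc M N $ k"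
proof -
  have "Ssum sc M N $ k = (\<Sum>j\<le>N. phi sc (1 / fact j) * (M ^ j $ k))"
    unfolding Ssum_def by (simp add: fps_sum_nth)
  also have "\<dots> = (\<Sum>j\<le>k. phi sc (1 / fact j) * (M ^ j $ k))"
  proof (rule sum.mono_neutral_right)
    show "\<forall>i\<in>{..N} - {..k}. phi sc (1 / fact i) * (M ^ i $ k) = 0"
    proof
      fix i assume "i \<in> {..N} - {..k}"
      then have "k < i" by auto
      then show "phi sc (1 / fact i) * (M ^ i $ k) = 0" using pow_zero[OF assms(2)] by simp
    qed
  qed (use assms in auto)
  finally show ?thesis using E_nth[OF assms(1)] by simp
qed

lemma mult_local: "(\<forall>i\<le>k. B $ i = B' $ i) \<Longrightarrow> (A * B) $ k = (A * B') $ k"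
  by (simp add: fps_mult_nth)

lemma helper_ac: "fps_const a * (fps_const b * D * P) = D * (fps_const (a * b) * (P::'a::comm_ring_1 fps))"
  by (simp add: mult_ac)

lemma Ssum_deriv:
  fixes sc :: "'k::field_char_0 \<Rightarrow> 'a::comm_ring_1 \<Rightarrow> 'a"
  assumes "is_comm_alg sc"
  shows "fps_deriv (Ssum sc M (Suc N)) = fps_deriv M * Ssum sc M N"
proof -
  have c: "phi sc (1 / fact (Suc i)) * of_nat (Suc i) = phi sc (1 / fact i)" for i
  proof -
    have nz: "(of_nat (Suc i)::'k) \<noteq> 0" by (rule of_nat_neq_0)
    have f: "(fact (Suc i)::'k) = of_nat (Suc i) * fact i" by (rule fact_Suc)
    have "(1 / fact (Suc i) :: 'k) * of_nat (Suc i) = 1 / fact i"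
      unfolding f using nz by (simp del: of_nat_Suc)
    note e = this
    have "phi sc (1 / fact (Suc i)) * of_nat (Suc i) = phi sc (1 / fact (Suc i)) * phi sc (of_nat (Suc i))"
      by (simp only: phi_of_nat[OF assms])
    also have "\<dots> = phi sc (1 / fact (Suc i) * of_nat (Suc i))"
      by (simp only: phi_mult[OF assms])
    also have "\<dots> = phi sc (1 / fact i)" by (simp only: e)
    finally show ?thesis .
  qed
  have "fps_deriv (Ssum sc M (Suc N)) =
     (\<Sum>j\<le>Suc N. fps_const (phi sc (1 / fact j)) * (fps_const (of_nat j) * fps_deriv M * M ^ (j - 1)))"
    by (simp only: Ssum_def fps_deriv_sum fps_deriv_mult_const_left fps_deriv_power)
  also have "\<dots> = (\<Sum>i\<le>N. fps_const (phi sc (1 / fact (Suc i))) * (fps_const (of_nat (Suc i)) * fps_deriv M * M ^ i))"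
    by (simp only: sum.atMost_Suc_shift diff_Suc_1 of_nat_0 fps_const_0_eq_0 mult_zero_left mult_zero_right add_0_left)
  also have "\<dots> = (\<Sum>i\<le>N. fps_deriv M * (fps_const (phi sc (1 / fact (Suc i)) * of_nat (Suc i)) * M ^ i))"
    by (intro sum.cong refl) (simp only: helper_ac)
  also have "\<dots> = fps_deriv M * Ssum sc M N"
    by (simp only: c Ssum_def sum_distrib_left)
  finally show ?thesis .
qed

lemma exp_deriv:
  assumes "is_comm_alg sc" "M $ 0 = 0"
  shows "fps_deriv (fps_exp_alg sc M) = fps_deriv M * fps_exp_alg sc M"
proof (rule fps_ext)
  fix k
  have "fps_deriv (fps_exp_alg sc M) $ k = of_nat (k + 1) * Ssum sc M (Suc k) $ (k + 1)"
    using trunc[OF assms, of "k+1" "Suc k"] by simp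
  also have "\<dots> = fps_deriv (Ssum sc M (Suc k)) $ k" by simp
  also have "\<dots> = (fps_deriv M * Ssum sc M k) $ k" by (simp add: Ssum_deriv[OF assms(1)])
  also have "\<dots> = (fps_deriv M * fps_exp_alg sc M) $ k"
    by (rule mult_local) (use trunc[OF assms] in simp)
  finally show "fps_deriv (fps_exp_alg sc M) $ k = (fps_deriv M * fps_exp_alg sc M) $ k" .
qed

lemma exp_nth0: "is_comm_alg sc \<Longrightarrow> fps_exp_alg sc M $ 0 = 1"
  by (simp add: E_nth phi_one)

lemma expalg_zero: "is_comm_alg sc \<Longrightarrow> fps_exp_alg sc 0 = 1"
proof (rule fps_ext)
  fix k assume a: "is_comm_alg sc"
  have "fps_exp_alg sc 0 $ k = Ssum sc 0 k $ k" by (rule trunc[OF a]) simp_all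
  also have "Ssum sc 0 k = 1"
    unfolding Ssum_def by (subst sum.atMost_shift) (simp add: phi_one[OF a])
  finally show "fps_exp_alg sc 0 $ k = 1 $ k" by simp
qed

lemma unit_cancel:
  fixes X E :: "'a::comm_ring_1 fps"
  assumes "X * E = 0" "E $ 0 = 1"
  shows "X = 0"
proof -
  have "E * fps_right_inverse E 1 = 1" by (rule fps_right_inverse) (simp add: assms)
  then have "X = X * E * fps_right_inverse E 1" by (simp add: mult.assoc)
  then show ?thesis using assms by simp
qed

lemma exp_inj:
  assumes "is_comm_alg sc" "M1 $ 0 = 0" "M2 $ 0 = 0"
    and "fps_exp_alg sc M1 = fps_exp_alg sc M2"
  shows "M1 = M2"
proof -
  let ?E = "fps_exp_alg sc M1"
  have "fps_deriv M1 * ?E = fps_deriv M2 * ?E"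
    using exp_deriv[OF assms(1,2)] exp_deriv[OF assms(1,3)] assms(4) by simp
  then have "(fps_deriv M1 - fps_deriv M2) * ?E = 0" by (simp add: algebra_simps)
  then have d: "fps_deriv M1 = fps_deriv M2"
    using unit_cancel exp_nth0[OF assms(1)] by fastforce
  show ?thesis
  proof (rule fps_ext)
    fix k show "M1 $ k = M2 $ k"
    proof (cases k)
      case 0 then show ?thesis using assms by simp
    next
      case (Suc j)
      have "of_nat (Suc j) * M1 $ Suc j = of_nat (Suc j) * M2 $ Suc j"
        using arg_cong[OF d, of "\<lambda>F. F $ j"] by simp
      then show ?thesis using cancel_nat[OF assms(1)] Suc by blast
    qed
  qed
qed



lemma fmc_nth [simp]: "fps_map_coeff h X $ k = h (X $ k)"
  unfolding fps_map_coeff_def by simp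

lemma fmc_comp: "fps_map_coeff f (fps_map_coeff g X) = fps_map_coeff (\<lambda>x. f (g x)) X"
  by (rule fps_ext) simp

definition addh :: "('a::comm_ring_1 \<Rightarrow> 'b::comm_ring_1) \<Rightarrow> bool" where
  "addh h \<longleftrightarrow> (\<forall>x y. h (x + y) = h x + h y)"

definition rhom :: "('a::comm_ring_1 \<Rightarrow> 'b::comm_ring_1) \<Rightarrow> bool" where
  "rhom h \<longleftrightarrow> addh h \<and> (\<forall>x y. h (x * y) = h x * h y) \<and> h 1 = 1"

lemma addh_0: "addh h \<Longrightarrow> h 0 = 0"
  unfolding addh_def by (metis add_0 add_cancel_right_right)

lemma addh_sum: "addh h \<Longrightarrow> h (sum g A) = (\<Sum>x\<in>A. h (g x))"
proof (induction A rule: infinite_finite_induct)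
  case (infinite A) then show ?case by (simp add: addh_0)
next
  case empty then show ?case by (simp add: addh_0)
next
  case (insert x F) then show ?case by (simp add: addh_def)
qed

lemma addh_minus: "addh h \<Longrightarrow> h (- x) = - h x"
  unfolding addh_def by (metis add.right_inverse addh_0 addh_def minus_unique)

lemma addh_of_nat: "addh h \<Longrightarrow> h (of_nat n * x) = of_nat n * h x"
  by (induction n) (simp_all add: addh_0 addh_def algebra_simps)

lemma rhom_power: "rhom h \<Longrightarrow> h (x ^ n) = h x ^ n"
  unfolding rhom_def by (induction n) simp_all

lemma fmc_addh: "addh h \<Longrightarrow> addh (fps_map_coeff h)"
  unfolding addh_def by (auto intro!: fps_ext)

lemma fmc_rhom: "rhom h \<Longrightarrow> rhom (fps_map_coeff h)"
proof -
  assume r: "rhom h"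
  then have a: "addh h" and m: "\<And>x y. h (x * y) = h x * h y" and o: "h 1 = 1"
    unfolding rhom_def by auto
  have "fps_map_coeff h (X * Y) = fps_map_coeff h X * fps_map_coeff h Y" for X Y
    by (rule fps_ext) (simp add: fps_mult_nth addh_sum[OF a] m)
  moreover have "fps_map_coeff h 1 = 1"
    by (rule fps_ext) (simp add: o addh_0[OF a])
  ultimately show ?thesis using fmc_addh[OF a] unfolding rhom_def by auto
qed

lemma Ssum_hom:
  fixes sc1 :: "'k::field_char_0 \<Rightarrow> 'a::comm_ring_1 \<Rightarrow> 'a" and sc2 :: "'k \<Rightarrow> 'b::comm_ring_1 \<Rightarrow> 'b"
    and H :: "'a fps \<Rightarrow> 'b fps"
  assumes r: "rhom H"
    and scal: "\<forall>c X. H (fps_const (phi sc1 c) * X) = fps_const (phi sc2 c) * H X"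
  shows "H (Ssum sc1 M N) = Ssum sc2 (H M) N"
proof -
  have a: "addh H" using r by (simp add: rhom_def)
  have s: "\<And>c X. H (fps_const (phi sc1 c) * X) = fps_const (phi sc2 c) * H X" using scal by blast
  show ?thesis unfolding Ssum_def
    by (simp only: addh_sum[OF a] s rhom_power[OF r])
qed

lemma transport:
  fixes sc1 :: "'k::field_char_0 \<Rightarrow> 'a::comm_ring_1 \<Rightarrow> 'a" and sc2 :: "'k \<Rightarrow> 'b::comm_ring_1 \<Rightarrow> 'b"
    and H :: "'a fps \<Rightarrow> 'b fps"
  assumes a1: "is_comm_alg sc1" and a2: "is_comm_alg sc2" and r: "rhom H"
    and scal: "\<forall>c X. H (fps_const (phi sc1 c) * X) = fps_const (phi sc2 c) * H X"
    and loc: "\<forall>X Y k. (\<forall>d\<le>k. X $ d = Y $ d) \<longrightarrow> H X $ k = H Y $ k"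
    and M0: "M $ 0 = 0" and HM0: "H M $ 0 = 0"
  shows "H (fps_exp_alg sc1 M) = fps_exp_alg sc2 (H M)"
proof (rule fps_ext)
  fix k
  have "H (fps_exp_alg sc1 M) $ k = H (Ssum sc1 M k) $ k"
    using loc trunc[OF a1 M0] by simp
  also have "\<dots> = Ssum sc2 (H M) k $ k" using Ssum_hom[OF r scal] by simp
  also have "\<dots> = fps_exp_alg sc2 (H M) $ k" using trunc[OF a2 HM0, of k k] by simp
  finally show "H (fps_exp_alg sc1 M) $ k = fps_exp_alg sc2 (H M) $ k" .
qed

lemma transport_fmc:
  fixes sc1 :: "'k::field_char_0 \<Rightarrow> 'a::comm_ring_1 \<Rightarrow> 'a" and sc2 :: "'k \<Rightarrow> 'b::comm_ring_1 \<Rightarrow> 'b"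
  assumes a1: "is_comm_alg sc1" and a2: "is_comm_alg sc2" and r: "rhom h"
    and scal: "\<forall>c x. h (phi sc1 c * x) = phi sc2 c * h x"
    and M0: "M $ 0 = 0"
  shows "fps_map_coeff h (fps_exp_alg sc1 M) = fps_exp_alg sc2 (fps_map_coeff h M)"
proof (rule transport[OF a1 a2 fmc_rhom[OF r]])
  show "\<forall>c X. fps_map_coeff h (fps_const (phi sc1 c) * X) = fps_const (phi sc2 c) * fps_map_coeff h X"
    using scal by (auto intro!: fps_ext)
  show "\<forall>X Y k. (\<forall>d\<le>k. X $ d = Y $ d) \<longrightarrow> fps_map_coeff h X $ k = fps_map_coeff h Y $ k"
    by simp
  show "M $ 0 = 0" by fact
  show "fps_map_coeff h M $ 0 = 0" using M0 r by (simp add: rhom_def addh_0)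
qed

section \<open>Diagonal\<close>

definition diag :: "'a::comm_ring_1 poly fps \<Rightarrow> 'a fps" where
  "diag X = Abs_fps (\<lambda>k. \<Sum>d\<le>k. coeff (X $ d) (k - d))"

lemma diag_nth: "diag X $ k = (\<Sum>d\<le>k. coeff (X $ d) (k - d))"
  unfolding diag_def by simp

lemma diag_add: "diag (X + Y) = diag X + diag Y"
  by (rule fps_ext) (simp add: diag_nth sum.distrib)

lemma diag_zero: "diag 0 = 0"
  by (rule fps_ext) (simp add: diag_nth)

lemma diag_one: "diag 1 = 1"
proof (rule fps_ext)
  fix k
  have "diag 1 $ k = (\<Sum>d\<le>k. coeff (1 $ d) (k - d))" by (rule diag_nth)
  also have "\<dots> = (\<Sum>d\<le>k. if d = 0 then coeff 1 k else 0)"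
    by (intro sum.cong refl) auto
  also have "\<dots> = coeff 1 k" by simp
  finally show "diag 1 $ k = 1 $ k" by (cases "k = 0") simp_all
qed

lemma diag_X: "diag (fps_X * Y) = fps_X * diag Y"
proof (rule fps_ext)
  fix k show "diag (fps_X * Y) $ k = (fps_X * diag Y) $ k"
  proof (cases k)
    case 0 then show ?thesis by (simp add: diag_nth)
  next
    case (Suc j)
    have "diag (fps_X * Y) $ k = (\<Sum>d\<le>Suc j. coeff ((fps_X * Y) $ d) (Suc j - d))"
      using Suc by (simp add: diag_nth)
    also have "\<dots> = (\<Sum>d\<le>j. coeff (Y $ d) (j - d))"
      by (subst sum.atMost_Suc_shift) simp
    finally show ?thesis using Suc by (simp add: diag_nth)
  qed
qed

lemma diag_constc: "diag (fps_const [:c:] * Y) = fps_const c * diag Y"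
  by (rule fps_ext) (simp add: diag_nth sum_distrib_left)

lemma diag_constX: "diag (fps_const (pCons 0 q) * Y) = fps_X * diag (fps_const q * Y)"
proof (rule fps_ext)
  fix k show "diag (fps_const (pCons 0 q) * Y) $ k = (fps_X * diag (fps_const q * Y)) $ k"
  proof (cases k)
    case 0 then show ?thesis by (simp add: diag_nth)
  next
    case (Suc j)
    have "diag (fps_const (pCons 0 q) * Y) $ k = (\<Sum>d\<le>Suc j. coeff (pCons 0 (q * Y $ d)) (Suc j - d))"
      using Suc by (simp add: diag_nth)
    also have "\<dots> = (\<Sum>d\<le>j. coeff (pCons 0 (q * Y $ d)) (Suc j - d))"
      by simp
    also have "\<dots> = (\<Sum>d\<le>j. coeff (q * Y $ d) (j - d))"
      by (intro sum.cong refl) (simp add: Suc_diff_le)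
    finally show ?thesis using Suc by (simp add: diag_nth)
  qed
qed

lemma diag_const_mult: "diag (fps_const p * Y) = diag (fps_const p) * diag Y"
proof (induction p arbitrary: Y)
  case 0 then show ?case by (simp add: diag_zero)
next
  case (pCons a p)
  have e: "pCons a p = [:a:] + pCons 0 p" by simp
  have "diag (fps_const (pCons a p) * Z) = fps_const a * diag Z + fps_X * diag (fps_const p * Z)" for Z
    unfolding e by (simp only: fps_const_add[symmetric] distrib_right diag_add diag_constc diag_constX)
  from this[of Y] this[of 1] show ?case
    using pCons.IH[of Y] by (simp add: diag_one algebra_simps)
qed

lemma diag_mult: "diag (X * Y) = diag X * diag Y"
proof (rule fps_ext)
  fix k show "diag (X * Y) $ k = (diag X * diag Y) $ k"
  proof (induction k arbitrary: X)
    case 0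
    have "diag (X * Y) $ 0 = coeff (X $ 0) 0 * coeff (Y $ 0) 0" by (simp add: diag_nth fps_mult_nth coeff_mult_0)
    then show ?case by (simp add: diag_nth fps_mult_nth)
  next
    case (Suc j)
    define Xs where "Xs = Abs_fps (\<lambda>n. X $ Suc n)"
    have dec: "X = fps_const (X $ 0) + fps_X * Xs"
      by (rule fps_ext) (simp add: Xs_def)
    have d1: "diag (X * Y) = diag (fps_const (X $ 0)) * diag Y + fps_X * diag (Xs * Y)"
      by (subst dec) (simp only: distrib_right diag_add diag_const_mult mult.assoc diag_X)
    have d2: "diag X = diag (fps_const (X $ 0)) + fps_X * diag Xs"
      by (subst dec) (simp only: diag_add diag_X)
    have "(fps_X * diag (Xs * Y)) $ Suc j = (fps_X * (diag Xs * diag Y)) $ Suc j"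
      using Suc.IH[of Xs] by simp
    then show ?case unfolding d1 d2 by (simp add: distrib_right mult.assoc)
  qed
qed

lemma diag_rhom: "rhom diag"
  unfolding rhom_def addh_def by (simp add: diag_add diag_mult diag_one)

lemma diag_map:
  assumes "addh f"
  shows "diag (fps_map_coeff (map_poly f) X) = fps_map_coeff f (diag X)"
  by (rule fps_ext) (simp add: diag_nth coeff_map_poly addh_0[OF assms] addh_sum[OF assms])

section \<open>Polynomial algebra\<close>

definition scw :: "('k::field_char_0 \<Rightarrow> 'a::comm_ring_1 \<Rightarrow> 'a) \<Rightarrow> 'k \<Rightarrow> 'a poly \<Rightarrow> 'a poly" where
  "scw sc c p = smult (phi sc c) p"

lemma scw_alg: "is_comm_alg sc \<Longrightarrow> is_comm_alg (scw sc)"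
  unfolding is_comm_alg_def[of "scw sc"] scw_def
  by (simp add: phi_add phi_mult phi_one smult_add_right smult_add_left)

lemma phi_scw: "phi (scw sc) c = [:phi sc c:]"
  unfolding phi_def scw_def by simp

lemma transport_diag:
  fixes sc :: "'k::field_char_0 \<Rightarrow> 'a::comm_ring_1 \<Rightarrow> 'a"
  assumes a: "is_comm_alg sc" and M0: "M $ 0 = 0"
  shows "diag (fps_exp_alg (scw sc) M) = fps_exp_alg sc (diag M)"
proof (rule transport[OF scw_alg[OF a] a diag_rhom])
  show "\<forall>c X. diag (fps_const (phi (scw sc) c) * X) = fps_const (phi sc c) * diag X"
    by (simp add: phi_scw diag_constc)
  show "\<forall>X Y k. (\<forall>d\<le>k. X $ d = Y $ d) \<longrightarrow> diag X $ k = diag Y $ k"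
    by (simp add: diag_nth)
  show "M $ 0 = 0" by fact
  show "diag M $ 0 = 0" using M0 by (simp add: diag_nth)
qed

lemma ev_rhom: "rhom (\<lambda>p. poly p x)"
  unfolding rhom_def addh_def by simp

lemma root_lemma:
  fixes sc :: "'k::field_char_0 \<Rightarrow> 'a::comm_ring_1 \<Rightarrow> 'a"
  assumes a: "is_comm_alg sc"
  shows "finite F \<Longrightarrow> (\<forall>l. l \<notin> F \<longrightarrow> poly c (phi sc l) = 0) \<Longrightarrow> c = 0"
proof (induction "degree c" arbitrary: c F)
  case 0
  obtain l :: 'k where "l \<notin> F" using ex_new_if_finite[OF infinite_UNIV_char_0 0(2)] by blast
  then have p: "poly c (phi sc l) = 0" using 0 by simp
  have c: "c = [:coeff c 0:]" using 0(1) degree_0_id by metis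
  have "poly c (phi sc l) = coeff c 0" by (subst c) simp
  then have "coeff c 0 = 0" using p by simp
  then show ?case by (subst c) simp
next
  case (Suc n)
  obtain l :: 'k where l: "l \<notin> F" using ex_new_if_finite[OF infinite_UNIV_char_0 Suc(3)] by blast
  define q where "q = synthetic_div c (phi sc l)"
  have cq: "[:- phi sc l, 1:] * q = c"
    using synthetic_div_correct'[of "phi sc l" c] Suc(4) l by (simp add: q_def)
  have "q = 0"
  proof (rule Suc(1))
    show "n = degree q" using Suc(2) by (simp add: q_def degree_synthetic_div)
    show "finite (insert l F)" using Suc(3) by simp
    show "\<forall>l'. l' \<notin> insert l F \<longrightarrow> poly q (phi sc l') = 0"
    proof (intro allI impI)
      fix l' assume l': "l' \<notin> insert l F"
      then have "poly c (phi sc l') = 0" using Suc(4) by simp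
      moreover have "poly c (phi sc l') = (phi sc l' - phi sc l) * poly q (phi sc l')"
        by (subst cq[symmetric]) (simp add: algebra_simps)
      ultimately have "(phi sc l' - phi sc l) * poly q (phi sc l') = 0" by simp
      then have "phi sc (l' - l) * poly q (phi sc l') = 0" by (simp add: phi_diff[OF a])
      then have "phi sc (1 / (l' - l)) * phi sc (l' - l) * poly q (phi sc l') = 0"
        by (simp add: mult.assoc)
      then show "poly q (phi sc l') = 0" using phi_inv[OF a, of "l' - l"] l' by auto
    qed
  qed
  then show ?case using cq by simp
qed



lemma ln_nth: "is_comm_alg sc \<Longrightarrow>
  fps_ln1p sc a $ k = (if k = 0 then 0 else phi sc ((- 1) ^ (k - 1) / of_nat k) * a ^ k)"
  unfolding fps_ln1p_def by (simp add: sc_phi)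

lemma ln_deriv_nth:
  fixes sc :: "'k::field_char_0 \<Rightarrow> 'a::comm_ring_1 \<Rightarrow> 'a"
  assumes a: "is_comm_alg sc"
  shows "fps_deriv (fps_ln1p sc x) $ k = (- 1) ^ k * x ^ Suc k"
proof -
  have "fps_deriv (fps_ln1p sc x) $ k = of_nat (Suc k) * (phi sc ((- 1) ^ k / of_nat (Suc k)) * x ^ Suc k)"
    by (simp only: fps_deriv_nth ln_nth[OF a] Suc_eq_plus1[symmetric]) simp
  also have "\<dots> = (phi sc (of_nat (Suc k)) * phi sc ((- 1) ^ k / of_nat (Suc k))) * x ^ Suc k"
    by (simp only: phi_of_nat[OF a] mult.assoc)
  also have "\<dots> = phi sc ((- 1) ^ k) * x ^ Suc k"
  proof -
    have "(of_nat (Suc k) :: 'k) * ((- 1) ^ k / of_nat (Suc k)) = (- 1) ^ k"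
      using of_nat_neq_0[of k, where 'a='k] by (simp del: of_nat_Suc)
    then show ?thesis by (simp only: phi_mult[OF a, symmetric])
  qed
  also have "\<dots> = (- 1) ^ k * x ^ Suc k" by (simp add: phi_power[OF a] phi_minus[OF a] phi_one[OF a])
  finally show ?thesis .
qed

lemma ln_ode:
  fixes sc :: "'k::field_char_0 \<Rightarrow> 'a::comm_ring_1 \<Rightarrow> 'a"
  assumes a: "is_comm_alg sc"
  shows "(1 + fps_const x * fps_X) * fps_deriv (fps_ln1p sc x) = fps_const x"
proof -
  let ?D = "fps_deriv (fps_ln1p sc x)"
  have e: "(1 + fps_const x * fps_X) * ?D = ?D + fps_const x * (fps_X * ?D)"
    by (simp add: algebra_simps)
  show ?thesis
  proof (rule fps_ext)
    fix k show "((1 + fps_const x * fps_X) * ?D) $ k = fps_const x $ k"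
      unfolding e by (cases k) (simp_all add: ln_deriv_nth[OF a] del: fps_deriv_nth)
  qed
qed

lemma exp_ln1p:
  fixes sc :: "'k::field_char_0 \<Rightarrow> 'a::comm_ring_1 \<Rightarrow> 'a"
  assumes a: "is_comm_alg sc"
  shows "fps_exp_alg sc (fps_ln1p sc x) = 1 + fps_const x * fps_X"
proof -
  let ?l = "fps_ln1p sc x"
  let ?E = "fps_exp_alg sc ?l"
  let ?G = "1 + fps_const x * fps_X"
  have l0: "?l $ 0 = 0" by (simp add: ln_nth[OF a])
  have "?G * fps_deriv ?E = (?G * fps_deriv ?l) * ?E"
    by (simp add: exp_deriv[OF a l0] mult.assoc)
  also have "\<dots> = fps_const x * ?E" by (simp add: ln_ode[OF a])
  finally have e1: "?G * fps_deriv ?E = fps_const x * ?E" .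
  have e2: "?G * fps_deriv ?G = fps_const x * ?G" by (simp add: mult.commute)
  define D where "D = ?E - ?G"
  have ode: "?G * fps_deriv D = fps_const x * D"
    unfolding D_def using e1 e2 by (simp add: algebra_simps)
  have D0: "D $ 0 = 0" unfolding D_def by (simp add: exp_nth0[OF a])
  have "D $ k = 0" for k
  proof (induction k)
    case 0 then show ?case by (rule D0)
  next
    case (Suc j)
    have "(?G * fps_deriv D) $ j = fps_deriv D $ j + x * (if j = 0 then 0 else fps_deriv D $ (j - 1))"
      by (simp add: algebra_simps)
    also have "\<dots> = fps_deriv D $ j"
      using Suc.IH by (cases j) simp_all
    finally have "fps_deriv D $ j = x * D $ j" using ode by simp
    then have "of_nat (Suc j) * D $ Suc j = of_nat (Suc j) * 0" using Suc.IH by simp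
    then show ?case by (rule cancel_nat[OF a])
  qed
  then have "D = 0" by (intro fps_ext) simp
  then show ?thesis unfolding D_def by simp
qed

lemma poly_sum_le:
  fixes p :: "'a::comm_ring_1 poly"
  assumes "degree p \<le> N"
  shows "poly p x = (\<Sum>i\<le>N. coeff p i * x ^ i)"
proof -
  have "poly p x = (\<Sum>i\<le>degree p. coeff p i * x ^ i)" by (rule poly_altdef)
  also have "\<dots> = (\<Sum>i\<le>N. coeff p i * x ^ i)"
    by (rule sum.mono_neutral_left) (use assms in \<open>auto simp: coeff_eq_0\<close>)
  finally show ?thesis .
qed

lemma degree_map_poly_le': "f 0 = 0 \<Longrightarrow> degree (map_poly f p) \<le> degree p"
  by (rule degree_le) (simp add: coeff_map_poly coeff_eq_0)

lemma ev_commute: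
  fixes scB :: "'k::field_char_0 \<Rightarrow> 'b::comm_ring_1 \<Rightarrow> 'b" and scC :: "'k \<Rightarrow> 'c::comm_ring_1 \<Rightarrow> 'c"
  assumes aB: "is_comm_alg scB" and aC: "is_comm_alg scC" and lin: "is_lin_map scB scC f"
  shows "poly (map_poly f p) (phi scC l) = f (poly p (phi scB l))"
proof -
  have ad: "addh f" using lin by (simp add: is_lin_map_def addh_def)
  have sc: "\<And>c x. f (scB c x) = scC c (f x)" using lin by (simp add: is_lin_map_def)
  have f0: "f 0 = 0" by (rule addh_0[OF ad])
  have "poly (map_poly f p) (phi scC l) = (\<Sum>i\<le>degree p. f (coeff p i) * phi scC l ^ i)"
    using poly_sum_le[OF degree_map_poly_le'[of f, OF f0], of p] by (simp add: coeff_map_poly f0)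
  also have "\<dots> = (\<Sum>i\<le>degree p. f (coeff p i * phi scB l ^ i))"
  proof (intro sum.cong refl)
    fix i
    have "f (coeff p i * phi scB l ^ i) = f (scB (l ^ i) (coeff p i))"
      by (simp add: sc_phi[OF aB] phi_power[OF aB] mult.commute)
    also have "\<dots> = scC (l ^ i) (f (coeff p i))" by (rule sc)
    also have "\<dots> = f (coeff p i) * phi scC l ^ i"
      by (simp add: sc_phi[OF aC] phi_power[OF aC] mult.commute)
    finally show "f (coeff p i) * phi scC l ^ i = f (coeff p i * phi scB l ^ i)" by simp
  qed
  also have "\<dots> = f (poly p (phi scB l))"
    by (simp add: poly_altdef addh_sum[OF ad])
  finally show ?thesis .
qed

lemma ln_ev:
  fixes sc :: "'k::field_char_0 \<Rightarrow> 'b::comm_ring_1 \<Rightarrow> 'b"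
  assumes a: "is_comm_alg sc"
  shows "fps_map_coeff (\<lambda>p. poly p y) (fps_ln1p (scw sc) x) = fps_ln1p sc (poly x y)"
  by (rule fps_ext) (simp add: ln_nth[OF a] ln_nth[OF scw_alg[OF a]] phi_scw)

lemma polar:
  fixes scB :: "'k::field_char_0 \<Rightarrow> 'b::comm_ring_1 \<Rightarrow> 'b" and scC :: "'k \<Rightarrow> 'c::comm_ring_1 \<Rightarrow> 'c"
  assumes aB: "is_comm_alg scB" and aC: "is_comm_alg scC" and lin: "is_lin_map scB scC f"
    and hyp: "\<forall>a k. n < k \<longrightarrow> fps_exp_alg scC (fps_map_coeff f (fps_ln1p scB a)) $ k = 0"
    and k: "n < k"
  shows "fps_exp_alg (scw scC) (fps_map_coeff (map_poly f) (fps_ln1p (scw scB) x)) $ k = 0"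
proof -
  have ad: "addh f" using lin by (simp add: is_lin_map_def addh_def)
  have f0: "f 0 = 0" by (rule addh_0[OF ad])
  let ?M = "fps_map_coeff (map_poly f) (fps_ln1p (scw scB) x)"
  have M0: "?M $ 0 = 0" by (simp add: ln_nth[OF scw_alg[OF aB]] f0)
  show ?thesis
  proof (rule root_lemma[OF aC, of "{}"])
    show "\<forall>l. l \<notin> {} \<longrightarrow> poly (fps_exp_alg (scw scC) ?M $ k) (phi scC l) = 0"
    proof (intro allI impI)
      fix l
      let ?h = "\<lambda>p. poly p (phi scC l)"
      have "poly (fps_exp_alg (scw scC) ?M $ k) (phi scC l) = fps_map_coeff ?h (fps_exp_alg (scw scC) ?M) $ k"
        by simp
      also have "fps_map_coeff ?h (fps_exp_alg (scw scC) ?M) = fps_exp_alg scC (fps_map_coeff ?h ?M)"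
        by (rule transport_fmc[OF scw_alg[OF aC] aC ev_rhom _ M0]) (simp add: phi_scw)
      also have "fps_map_coeff ?h ?M = fps_map_coeff f (fps_map_coeff (\<lambda>p. poly p (phi scB l)) (fps_ln1p (scw scB) x))"
        by (rule fps_ext) (simp add: ev_commute[OF aB aC lin])
      also have "\<dots> = fps_map_coeff f (fps_ln1p scB (poly x (phi scB l)))"
        by (simp only: ln_ev[OF aB])
      finally show "poly (fps_exp_alg (scw scC) ?M $ k) (phi scC l) = 0" using hyp k by simp
    qed
  qed simp
qed

definition gr :: "nat \<Rightarrow> 'a::comm_ring_1 poly fps \<Rightarrow> bool" where
  "gr D X \<longleftrightarrow> (\<forall>d. degree (X $ d) \<le> D * d)"

lemma gr_mult: "gr D X \<Longrightarrow> gr D Y \<Longrightarrow> gr D (X * Y)"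
  unfolding gr_def
proof (intro allI)
  fix d assume x: "\<forall>d. degree (X $ d) \<le> D * d" and y: "\<forall>d. degree (Y $ d) \<le> D * d"
  show "degree ((X * Y) $ d) \<le> D * d"
    unfolding fps_mult_nth
  proof (rule degree_sum_le)
    fix i assume "i \<in> {0..d}"
    then have "D * i + D * (d - i) = D * d" by (simp add: add_mult_distrib2[symmetric])
    moreover have "degree (X $ i * Y $ (d - i)) \<le> degree (X $ i) + degree (Y $ (d - i))"
      by (rule degree_mult_le)
    ultimately show "degree (X $ i * Y $ (d - i)) \<le> D * d"
      using x y by (metis add_le_mono order_trans)
  qed simp
qed

lemma gr_one: "gr D 1"
  unfolding gr_def by simp

lemma gr_power: "gr D X \<Longrightarrow> gr D (X ^ j)"
  by (induction j) (simp_all add: gr_one gr_mult)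

lemma gr_exp:
  assumes a: "is_comm_alg sc" and g: "gr D M"
  shows "gr D (fps_exp_alg (scw sc) M)"
  unfolding gr_def
proof
  fix d
  show "degree (fps_exp_alg (scw sc) M $ d) \<le> D * d"
    unfolding E_nth[OF scw_alg[OF a]] phi_scw
  proof (rule degree_sum_le)
    fix j
    have "degree ([:phi sc (1 / fact j):] * M ^ j $ d) \<le> degree (M ^ j $ d)"
      by (simp add: degree_smult_le)
    then show "degree ([:phi sc (1 / fact j):] * M ^ j $ d) \<le> D * d"
      using gr_power[OF g, of j] unfolding gr_def by (meson order_trans)
  qed simp
qed

lemma gr_map: "f 0 = 0 \<Longrightarrow> gr D X \<Longrightarrow> gr D (fps_map_coeff (map_poly f) X)"
  unfolding gr_def by (metis degree_map_poly_le' fmc_nth order_trans)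

lemma gr_ln:
  assumes a: "is_comm_alg sc" and dg: "degree x \<le> D"
  shows "gr D (fps_ln1p (scw sc) x)"
  unfolding gr_def
proof
  fix d
  have "degree (x ^ d) \<le> D * d"
    using degree_power_le[of x d] dg by (metis mult.commute mult_le_mono2 order_trans)
  then show "degree (fps_ln1p (scw sc) x $ d) \<le> D * d"
    by (simp add: ln_nth[OF scw_alg[OF a]] phi_scw degree_smult_le order_trans[OF degree_smult_le])
qed



lemma keyK:
  fixes scB :: "'k::field_char_0 \<Rightarrow> 'b::comm_ring_1 \<Rightarrow> 'b" and scC :: "'k \<Rightarrow> 'c::comm_ring_1 \<Rightarrow> 'c"
  assumes aB: "is_comm_alg scB" and aC: "is_comm_alg scC" and lin: "is_lin_map scB scC f"
    and hyp: "\<forall>a k. n < k \<longrightarrow> fps_exp_alg scC (fps_map_coeff f (fps_ln1p scB a)) $ k = 0"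
    and L0: "L $ 0 = 0" and Pm: "\<forall>k. m < k \<longrightarrow> fps_exp_alg scB L $ k = 0"
    and k: "n * m < k"
  shows "fps_exp_alg scC (fps_map_coeff f L) $ k = 0"
proof -
  have ad: "addh f" using lin by (simp add: is_lin_map_def addh_def)
  have f0: "f 0 = 0" by (rule addh_0[OF ad])
  let ?P = "fps_exp_alg scB L"
  show ?thesis
  proof (cases "m = 0")
    case True
    have "?P = 1"
    proof (rule fps_ext)
      fix j show "?P $ j = 1 $ j"
        using Pm True exp_nth0[OF aB, of L] by (cases j) auto
    qed
    then have "L = 0" using exp_inj[OF aB L0, of 0] expalg_zero[OF aB] by simp
    then have "fps_map_coeff f L = 0" by (intro fps_ext) (simp add: f0)
    then show ?thesis using expalg_zero[OF aC] k True by simp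
  next
    case False
    define aw where "aw = (\<Sum>j<m. monom (?P $ Suc j) j)"
    have dga: "degree aw \<le> m - 1"
      unfolding aw_def by (rule degree_sum_le) (auto intro: order_trans[OF degree_monom_le])
    have coeff_aw: "coeff aw j = (if j < m then ?P $ Suc j else 0)" for j
      unfolding aw_def by (simp add: coeff_sum coeff_monom)
    define lw where "lw = fps_ln1p (scw scB) aw"
    have lw0: "lw $ 0 = 0" unfolding lw_def by (simp add: ln_nth[OF scw_alg[OF aB]])
    have dlw0: "diag lw $ 0 = 0" using lw0 by (simp add: diag_nth)
    have "fps_exp_alg scB (diag lw) = diag (fps_exp_alg (scw scB) lw)"
      by (rule transport_diag[OF aB lw0, symmetric])
    also have "\<dots> = diag (1 + fps_X * fps_const aw)"
      unfolding lw_def by (simp add: exp_ln1p[OF scw_alg[OF aB]] mult.commute)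
    also have "\<dots> = 1 + fps_X * diag (fps_const aw)"
      by (simp only: diag_add diag_one diag_X)
    also have "\<dots> = ?P"
    proof (rule fps_ext)
      fix j
      have dc: "diag (fps_const aw) $ i = coeff aw i" for i
      proof -
        have "diag (fps_const aw) $ i = (\<Sum>d\<le>i. if d = 0 then coeff aw i else 0)"
          unfolding diag_nth by (intro sum.cong refl) simp
        then show ?thesis by simp
      qed
      show "(1 + fps_X * diag (fps_const aw)) $ j = ?P $ j"
      proof (cases j)
        case 0 then show ?thesis by (simp add: exp_nth0[OF aB])
      next
        case (Suc i)
        then show ?thesis using Pm by (simp add: dc coeff_aw)
      qed
    qed
    finally have "fps_exp_alg scB (diag lw) = fps_exp_alg scB L" .
    then have dl: "diag lw = L" by (rule exp_inj[OF aB dlw0 L0])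
    define M where "M = fps_map_coeff (map_poly f) lw"
    have M0: "M $ 0 = 0" unfolding M_def using lw0 by simp
    define W where "W = fps_exp_alg (scw scC) M"
    have "diag W = fps_exp_alg scC (diag M)"
      unfolding W_def by (rule transport_diag[OF aC M0])
    also have "diag M = fps_map_coeff f L"
      unfolding M_def by (simp add: diag_map[OF ad] dl)
    finally have dW: "diag W = fps_exp_alg scC (fps_map_coeff f L)" .
    have Wn: "W $ d = 0" if "n < d" for d
      unfolding W_def M_def lw_def by (rule polar[OF aB aC lin hyp that])
    have grW: "gr (m - 1) W"
      unfolding W_def M_def lw_def
      by (intro gr_exp[OF aC] gr_map[of f, OF f0] gr_ln[OF aB dga])
    have "diag W $ k = (\<Sum>d\<le>k. coeff (W $ d) (k - d))" by (rule diag_nth)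
    also have "\<dots> = 0"
    proof (rule sum.neutral, intro ballI)
      fix d assume "d \<in> {..k}"
      show "coeff (W $ d) (k - d) = 0"
      proof (cases "n < d")
        case True then show ?thesis using Wn by simp
      next
        case False
        then have "d * m \<le> n * m" by simp
        then have "(m - 1) * d + d < k" using k False \<open>m \<noteq> 0\<close>
          by (metis Suc_pred' add.commute le_less_trans mult.commute mult_Suc_right neq0_conv)
        then have "degree (W $ d) < k - d" using grW unfolding gr_def
          by (metis add_diff_cancel_right' diff_less_mono le_add2 le_less_trans less_imp_le_nat)
        then show ?thesis by (simp add: coeff_eq_0)
      qed
    qed
    finally show ?thesis using dW by simp
  qed
qed

lemma main_generic:
  fixes scA :: "'k::field_char_0 \<Rightarrow> 'a::comm_ring_1 \<Rightarrow> 'a"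
    and scB :: "'k \<Rightarrow> 'b::comm_ring_1 \<Rightarrow> 'b" and scC :: "'k \<Rightarrow> 'c::comm_ring_1 \<Rightarrow> 'c"
  assumes aA: "is_comm_alg scA" and aB: "is_comm_alg scB" and aC: "is_comm_alg scC"
    and g: "is_n_hom scA scB m g" and f: "is_n_hom scB scC n f"
  shows "is_n_hom scA scC (n * m) (f \<circ> g)"
proof -
  have lg: "is_lin_map scA scB g" and g1: "g 1 = of_nat m"
    and gR: "\<forall>a k. m < k \<longrightarrow> char_fun scA scB g a $ k = 0"
    using g unfolding is_n_hom_def by auto
  have lf: "is_lin_map scB scC f" and f1: "f 1 = of_nat n"
    and fR: "\<forall>a k. n < k \<longrightarrow> char_fun scB scC f a $ k = 0"
    using f unfolding is_n_hom_def by auto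
  have adf: "addh f" using lf by (simp add: is_lin_map_def addh_def)
  have adg: "addh g" using lg by (simp add: is_lin_map_def addh_def)
  have lin: "is_lin_map scA scC (f \<circ> g)"
    using lf lg unfolding is_lin_map_def by simp
  have one: "(f \<circ> g) 1 = of_nat (n * m)"
  proof -
    have "(f \<circ> g) 1 = f (of_nat m * 1)" by (simp add: g1)
    also have "\<dots> = of_nat m * f 1" by (rule addh_of_nat[OF adf])
    finally show ?thesis by (simp add: f1)
  qed
  have R: "char_fun scA scC (f \<circ> g) a $ k = 0" if "n * m < k" for a k
  proof -
    let ?L = "fps_map_coeff g (fps_ln1p scA a)"
    have "char_fun scA scC (f \<circ> g) a = fps_exp_alg scC (fps_map_coeff f ?L)"
      unfolding char_fun_def by (simp add: fmc_comp comp_def)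
    moreover have "fps_exp_alg scC (fps_map_coeff f ?L) $ k = 0"
    proof (rule keyK[OF aB aC lf _ _ _ that])
      show "\<forall>a k. n < k \<longrightarrow> fps_exp_alg scC (fps_map_coeff f (fps_ln1p scB a)) $ k = 0"
        using fR unfolding char_fun_def .
      show "?L $ 0 = 0" by (simp add: ln_nth[OF aA] addh_0[OF adg])
      show "\<forall>k. m < k \<longrightarrow> fps_exp_alg scB ?L $ k = 0"
        using gR unfolding char_fun_def by blast
    qed
    ultimately show ?thesis by simp
  qed
  show ?thesis unfolding is_n_hom_def using lin one R by blast
qed

theorem mainTheorem3:
  shows "(\<forall>(scA :: real \<Rightarrow> 'a::comm_ring_1 \<Rightarrow> 'a) (scB :: real \<Rightarrow> 'b::comm_ring_1 \<Rightarrow> 'b)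
            (scC :: real \<Rightarrow> 'c::comm_ring_1 \<Rightarrow> 'c) (g :: 'a \<Rightarrow> 'b) (f :: 'b \<Rightarrow> 'c) m n.
            is_comm_alg scA \<and> is_comm_alg scB \<and> is_comm_alg scC \<and>
            is_n_hom scA scB m g \<and> is_n_hom scB scC n f \<longrightarrow>
            is_n_hom scA scC (n * m) (f \<circ> g)) \<and>
         (\<forall>(scA :: complex \<Rightarrow> 'a \<Rightarrow> 'a) (scB :: complex \<Rightarrow> 'b \<Rightarrow> 'b)
            (scC :: complex \<Rightarrow> 'c \<Rightarrow> 'c) (g :: 'a \<Rightarrow> 'b) (f :: 'b \<Rightarrow> 'c) m n.
            is_comm_alg scA \<and> is_comm_alg scB \<and> is_comm_alg scC \<and>
            is_n_hom scA scB m g \<and> is_n_hom scB scC n f \<longrightarrow>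
            is_n_hom scA scC (n * m) (f \<circ> g))"
  apply (intro conjI allI impI)
   apply (elim conjE, rule main_generic, assumption+)+
  done

end
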